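(* For all $\alpha\in[-1,1]$, \[ \Lambda(\alpha)\le c-|\alpha|(c-D),\qquad D=\mathbb E|F(0)|. \]
   Context: Let $c>0$, $q>0$, $\kappa>-1$. $F=(F(x))_{x\in\mathbb Z}$ and $B=(B(i))_{i\in\mathbb Z}$ are mutually independent families of i.i.d. random variables, $\mathbb P(B(i)=\pm1)=1/2$, and $F(x)$ has a density $\varrho$ that is even, continuous, strictly positive on $(-c,c)$, zero outside $(-c,c)$, with $\lim_{x\to c}\varrho(x)/|c-x|^{\kappa}=q$. A lazy walk satisfies $|\gamma(i+1)-\gamma(i)|\le1$; the action of a lazy walk $\gamma$ on $\{0,\dots,n\}$ is $A(B,F;\gamma)=\sum_{i=1}^nB(i)F(\gamma(i))$; $\bar A(B,F;n,k)$ is the minimal action over lazy walks from $(0,0)$ to $(n,k)$. The shape function $\Lambda$ is the deterministic function with $\bar A(B,F;n,[\alpha n])/n\to-\Lambda(\alpha)$ almost surely, $[\cdot]$ rounding towards $0$. *)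

theory Defs
  imports "HOL-Probability.Probability"
begin

definition round0 :: "real \<Rightarrow> int" where
  "round0 x = (if x \<ge> 0 then \<lfloor>x\<rfloor> else \<lceil>x\<rceil>)"

definition lazy_walk :: "nat \<Rightarrow> int \<Rightarrow> (nat \<Rightarrow> int) \<Rightarrow> bool" where
  "lazy_walk n k \<gamma> \<longleftrightarrow> \<gamma> 0 = 0 \<and> \<gamma> n = k \<and> (\<forall>i<n. \<bar>\<gamma> (Suc i) - \<gamma> i\<bar> \<le> 1)"

definition action :: "(int \<Rightarrow> real) \<Rightarrow> (int \<Rightarrow> real) \<Rightarrow> nat \<Rightarrow> (nat \<Rightarrow> int) \<Rightarrow> real" where
  "action b f n \<gamma> = (\<Sum>i=1..n. b (int i) * f (\<gamma> i))"

definition min_action :: "(int \<Rightarrow> real) \<Rightarrow> (int \<Rightarrow> real) \<Rightarrow> nat \<Rightarrow> int \<Rightarrow> real" where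
  "min_action b f n k = Inf (action b f n ` {\<gamma>. lazy_walk n k \<gamma>})"

definition env :: "(int \<Rightarrow> 'a \<Rightarrow> real) \<Rightarrow> (int \<Rightarrow> 'a \<Rightarrow> real) \<Rightarrow> int + int \<Rightarrow> 'a \<Rightarrow> real" where
  "env F B j = (case j of Inl x \<Rightarrow> F x | Inr i \<Rightarrow> B i)"

end

theory Submission
  imports Defs
begin

lemma walk_bound:
  fixes b f :: "int \<Rightarrow> real" and \<gamma> :: "nat \<Rightarrow> int"
  assumes b: "\<And>i. \<bar>b i\<bar> \<le> 1" and f: "\<And>x. \<bar>f x\<bar> \<le> c"
  shows "\<gamma> 0 = 0 \<Longrightarrow> (\<forall>i<n. \<bar>\<gamma> (Suc i) - \<gamma> i\<bar> \<le> 1) \<Longrightarrow> 0 \<le> j \<Longrightarrow> (\<exists>i\<le>n. j \<le> \<gamma> i)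
    \<Longrightarrow> action b f n \<gamma> \<ge> - c * real n + (\<Sum>x\<in>{1..j}. c - \<bar>f x\<bar>)"
proof (induction n arbitrary: j)
  case 0
  then have "j = 0" by auto
  then show ?case by (simp add: action_def)
next
  case (Suc n)
  have bf: "b (int (Suc n)) * f (\<gamma> (Suc n)) \<ge> - \<bar>f (\<gamma> (Suc n))\<bar>"
  proof -
    have "\<bar>b (int (Suc n)) * f (\<gamma> (Suc n))\<bar> \<le> 1 * \<bar>f (\<gamma> (Suc n))\<bar>"
      unfolding abs_mult by (rule mult_right_mono[OF b]) simp
    then show ?thesis by linarith
  qed
  have fc: "\<bar>f (\<gamma> (Suc n))\<bar> \<le> c" by (rule f)
  have act: "action b f (Suc n) \<gamma> = action b f n \<gamma> + b (int (Suc n)) * f (\<gamma> (Suc n))"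
    by (simp add: action_def)
  show ?case
  proof (cases "\<exists>i\<le>n. j \<le> \<gamma> i")
    case True
    have "action b f n \<gamma> \<ge> - c * real n + (\<Sum>x\<in>{1..j}. c - \<bar>f x\<bar>)"
      using Suc.IH[OF Suc.prems(1) _ Suc.prems(3) True] Suc.prems(2) by auto
    then show ?thesis using act bf fc by (simp add: algebra_simps)
  next
    case False
    then have jg: "j \<le> \<gamma> (Suc n)" using Suc.prems(4) le_Suc_eq by blast
    have jn: "\<gamma> n < j" using False by auto
    have step: "\<bar>\<gamma> (Suc n) - \<gamma> n\<bar> \<le> 1" using Suc.prems(2) by auto
    have j1: "j \<ge> 1" using False Suc.prems(1) by force
    have eq: "\<gamma> (Suc n) = j" "\<gamma> n = j - 1" using jg jn step by auto
    have IH: "action b f n \<gamma> \<ge> - c * real n + (\<Sum>x\<in>{1..j-1}. c - \<bar>f x\<bar>)"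
    proof -
      have "\<exists>i\<le>n. j - 1 \<le> \<gamma> i" using eq by auto
      then show ?thesis using Suc.IH[OF Suc.prems(1) _ _, of "j-1"] Suc.prems(2) j1 by auto
    qed
    have "{1..j} = insert j {1..j-1}" using j1 by auto
    then have s: "(\<Sum>x\<in>{1..j}. c - \<bar>f x\<bar>) = (c - \<bar>f j\<bar>) + (\<Sum>x\<in>{1..j-1}. c - \<bar>f x\<bar>)"
      by simp
    show ?thesis using act bf IH s eq by (simp add: algebra_simps)
  qed
qed


lemma min_action_bound:
  fixes b f :: "int \<Rightarrow> real"
  assumes b: "\<And>i. \<bar>b i\<bar> \<le> 1" and f: "\<And>x. \<bar>f x\<bar> \<le> c" and kn: "\<bar>k\<bar> \<le> int n"
  shows "min_action b f n k \<ge> - c * real n + (\<Sum>x\<in>{1..\<bar>k\<bar>}. c - \<bar>f (if 0 \<le> k then x else - x)\<bar>)"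
proof -
  define \<gamma>0 where "\<gamma>0 = (\<lambda>i::nat. if k \<ge> 0 then min (int i) k else max (- int i) k)"
  have "lazy_walk n k \<gamma>0" using kn unfolding lazy_walk_def \<gamma>0_def by auto
  then have ne: "action b f n ` {\<gamma>. lazy_walk n k \<gamma>} \<noteq> {}" by auto
  show ?thesis unfolding min_action_def
  proof (rule cInf_greatest[OF ne])
    fix a assume "a \<in> action b f n ` {\<gamma>. lazy_walk n k \<gamma>}"
    then obtain \<gamma> where g: "lazy_walk n k \<gamma>" and a: "a = action b f n \<gamma>" by auto
    show "- c * real n + (\<Sum>x\<in>{1..\<bar>k\<bar>}. c - \<bar>f (if 0 \<le> k then x else - x)\<bar>) \<le> a"
    proof (cases "0 \<le> k")
      case True
      have "action b f n \<gamma> \<ge> - c * real n + (\<Sum>x\<in>{1..k}. c - \<bar>f x\<bar>)"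
        by (rule walk_bound[OF b f]) (use g True in \<open>auto simp: lazy_walk_def\<close>)
      then show ?thesis using True a by simp
    next
      case False
      have "action b (\<lambda>x. f (- x)) n (\<lambda>i. - \<gamma> i) \<ge> - c * real n + (\<Sum>x\<in>{1..-k}. c - \<bar>f (- x)\<bar>)"
      proof (rule walk_bound[OF b])
        show "\<bar>f (- x)\<bar> \<le> c" for x by (rule f)
        show "\<forall>i<n. \<bar>- \<gamma> (Suc i) - - \<gamma> i\<bar> \<le> 1" using g by (auto simp: lazy_walk_def)
        show "\<exists>i\<le>n. - k \<le> - \<gamma> i" using g by (auto simp: lazy_walk_def)
      qed (use g False in \<open>auto simp: lazy_walk_def\<close>)
      moreover have "action b (\<lambda>x. f (- x)) n (\<lambda>i. - \<gamma> i) = action b f n \<gamma>"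
        by (simp add: action_def)
      ultimately show ?thesis using False a by simp
    qed
  qed
qed


lemma abs_round0: "n \<ge> 0 \<Longrightarrow> \<bar>round0 (a * n)\<bar> = \<lfloor>\<bar>a\<bar> * n\<rfloor>"
proof (cases "a \<ge> 0")
  case True
  assume n: "n \<ge> 0"
  then have "a * n \<ge> 0" using True by simp
  then show ?thesis using True by (simp add: round0_def)
next
  case False
  assume n: "n \<ge> 0"
  then have an: "a * n \<le> 0" using False by (simp add: mult_nonpos_nonneg)
  have "\<bar>a\<bar> * n = - (a * n)" using False by simp
  then show ?thesis using an False
    by (cases "a * n = 0") (auto simp: round0_def ceiling_def)
qed

lemma floor_lim:
  assumes "a \<ge> 0"
  shows "(\<lambda>n. real_of_int \<lfloor>a * real n\<rfloor> / real n) \<longlonglongrightarrow> a"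
proof (rule tendsto_sandwich[of "\<lambda>n. a - 1 / real n" _ _ "\<lambda>_. a"])
  show "\<forall>\<^sub>F n in sequentially. a - 1 / real n \<le> real_of_int \<lfloor>a * real n\<rfloor> / real n"
    using eventually_ge_at_top[of "1::nat"]
  proof eventually_elim
    case (elim n)
    then have np: "real n > 0" by simp
    have "a * real n - 1 \<le> real_of_int \<lfloor>a * real n\<rfloor>" by linarith
    then have "(a * real n - 1) / real n \<le> real_of_int \<lfloor>a * real n\<rfloor> / real n"
      using np by (simp add: divide_right_mono)
    moreover have "a - 1 / real n = (a * real n - 1) / real n" using np by (simp add: field_simps)
    ultimately show ?case by simp
  qed
  show "\<forall>\<^sub>F n in sequentially. real_of_int \<lfloor>a * real n\<rfloor> / real n \<le> a"
    using eventually_ge_at_top[of "1::nat"]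
  proof eventually_elim
    case (elim n)
    then have np: "real n > 0" by simp
    have "real_of_int \<lfloor>a * real n\<rfloor> \<le> a * real n" by linarith
    then show ?case using np by (simp add: field_simps)
  qed
  show "(\<lambda>n. a - 1 / real n) \<longlonglongrightarrow> a"
    using tendsto_diff[OF tendsto_const lim_const_over_n[of "1::real"]] by simp
qed simp

theorem lemma3p6:
  fixes M :: "'a measure"
    and F B :: "int \<Rightarrow> 'a \<Rightarrow> real"
    and \<rho> :: "real \<Rightarrow> real"
    and c q \<kappa> :: real
    and \<Lambda> :: "real \<Rightarrow> real"
    and \<alpha> :: real
  assumes "prob_space M"
    and "c > 0" and "q > 0" and "\<kappa> > -1"
    and indep: "prob_space.indep_vars M (\<lambda>_. borel) (env F B) UNIV"
    and B_dist: "\<And>i. prob_space.prob M {\<omega> \<in> space M. B i \<omega> = 1} = 1/2"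
    and B_dist': "\<And>i. prob_space.prob M {\<omega> \<in> space M. B i \<omega> = -1} = 1/2"
    and F_dist: "\<And>x. distributed M lborel (F x) (\<lambda>y. ennreal (\<rho> y))"
    and \<rho>_even: "\<And>y. \<rho> (-y) = \<rho> y"
    and \<rho>_cont: "continuous_on {-c<..<c} \<rho>"
    and \<rho>_pos: "\<And>y. y \<in> {-c<..<c} \<Longrightarrow> \<rho> y > 0"
    and \<rho>_zero: "\<And>y. y \<notin> {-c<..<c} \<Longrightarrow> \<rho> y = 0"
    and \<rho>_edge: "((\<lambda>y. \<rho> y / \<bar>c - y\<bar> powr \<kappa>) \<longlongrightarrow> q) (at_left c)"
    and shape: "\<And>\<beta>. \<beta> \<in> {-1..1} \<Longrightarrow>
       AE \<omega> in M. ((\<lambda>n. min_action (\<lambda>i. B i \<omega>) (\<lambda>x. F x \<omega>) n (round0 (\<beta> * real n)) / real n)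
                     \<longlonglongrightarrow> - \<Lambda> \<beta>)"
    and "\<alpha> \<in> {-1..1}"
  shows "\<Lambda> \<alpha> \<le> c - \<bar>\<alpha>\<bar> * (c - prob_space.expectation M (\<lambda>\<omega>. \<bar>F 0 \<omega>\<bar>))"
proof (rule ccontr)
  interpret P: prob_space M by fact
  note indep_rv = conjunct1[OF iffD1[OF P.indep_vars_def indep]]
  have Fm[measurable]: "F x \<in> borel_measurable M" for x
    using indep_rv[rule_format, of "Inl x"] by (simp add: env_def)
  have Bm[measurable]: "B i \<in> borel_measurable M" for i
    using indep_rv[rule_format, of "Inr i"] by (simp add: env_def)
  have \<rho>_nn: "\<rho> y \<ge> 0" for y
    using \<rho>_pos[of y] \<rho>_zero[of y] by (cases "y \<in> {-c<..<c}") auto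
  have Fbd: "AE \<omega> in M. \<bar>F x \<omega>\<bar> \<le> c" for x
  proof -
    have dm: "(\<lambda>y. ennreal (\<rho> y)) \<in> borel_measurable lborel"
      using distributed_borel_measurable[OF F_dist[of x]] .
    have "AE y in density lborel (\<lambda>y. ennreal (\<rho> y)). \<bar>y\<bar> \<le> c"
      unfolding AE_density[OF dm]
    proof (rule AE_I2, rule impI)
      fix y assume "0 < ennreal (\<rho> y)"
      then have "\<rho> y \<noteq> 0" by auto
      then have "y \<in> {-c<..<c}" using \<rho>_zero by blast
      then show "\<bar>y\<bar> \<le> c" by auto
    qed
    then have "AE y in distr M lborel (F x). \<bar>y\<bar> \<le> c"
      by (subst distributed_distr_eq_density[OF F_dist[of x]])
    then show ?thesis
      by (rule AE_distrD[OF distributed_measurable[OF F_dist[of x]]])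
  qed
  have Bbd: "AE \<omega> in M. \<bar>B i \<omega>\<bar> \<le> 1" for i
  proof -
    let ?A = "{\<omega> \<in> space M. B i \<omega> = 1}" and ?C = "{\<omega> \<in> space M. B i \<omega> = -1}"
    have ev1: "?A \<in> sets M" by measurable
    have ev2: "?C \<in> sets M" by measurable
    have dj: "?A \<inter> ?C = {}" by auto
    have "P.prob (?A \<union> ?C) = P.prob ?A + P.prob ?C"
      by (rule P.finite_measure_Union[OF ev1 ev2 dj])
    then have "P.prob (?A \<union> ?C) = 1" using B_dist B_dist' by simp
    then have "AE \<omega> in M. \<omega> \<in> ?A \<union> ?C" by (rule P.AE_prob_1)
    then show ?thesis by (rule AE_mp) (auto intro!: AE_I2)
  qed
  have good: "AE \<omega> in M. (\<forall>x. \<bar>F x \<omega>\<bar> \<le> c) \<and> (\<forall>i. \<bar>B i \<omega>\<bar> \<le> 1)"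
    using Fbd Bbd by (simp add: AE_all_countable)
  define D where "D = P.expectation (\<lambda>\<omega>. \<bar>F 0 \<omega>\<bar>)"
  have ED: "P.expectation (\<lambda>\<omega>. \<bar>F x \<omega>\<bar>) = D" for x
  proof -
    have "P.expectation (\<lambda>\<omega>. \<bar>F x \<omega>\<bar>) = (\<integral>y. \<rho> y * \<bar>y\<bar> \<partial>lborel)" for x
      by (rule distributed_integral[OF F_dist[of x], symmetric]) (auto simp: \<rho>_nn)
    then show ?thesis unfolding D_def by simp
  qed
  have Fint: "integrable M (\<lambda>\<omega>. \<bar>F x \<omega>\<bar>)" for x
    by (rule P.integrable_const_bound[where B=c]) (use Fbd[of x] in auto)
  have D0: "D \<ge> 0" unfolding D_def by simp
  define K where "K = (\<lambda>n::nat. \<bar>round0 (\<alpha> * real n)\<bar>)"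
  define sg where "sg = (\<lambda>(n::nat) (x::int). if 0 \<le> round0 (\<alpha> * real n) then x else - x)"
  define g where "g = (\<lambda>n \<omega>. (\<Sum>x\<in>{1..K n}. c - \<bar>F (sg n x) \<omega>\<bar>))"
  have gm[measurable]: "g n \<in> borel_measurable M" for n unfolding g_def by measurable
  have Kfl: "K n = \<lfloor>\<bar>\<alpha>\<bar> * real n\<rfloor>" for n unfolding K_def by (rule abs_round0) simp
  have Kn: "K n \<le> int n" for n
  proof -
    have "\<bar>\<alpha>\<bar> * real n \<le> real n" using \<open>\<alpha> \<in> {-1..1}\<close> by (auto intro: mult_left_le_one_le)
    then show ?thesis unfolding Kfl by linarith
  qed
  have K0: "K n \<ge> 0" for n unfolding K_def by simp
  have Eg: "P.expectation (g n) = real_of_int (K n) * (c - D)" for n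
  proof -
    have "P.expectation (g n) = (\<Sum>x\<in>{1..K n}. P.expectation (\<lambda>\<omega>. c - \<bar>F (sg n x) \<omega>\<bar>))"
      unfolding g_def by (rule Bochner_Integration.integral_sum) (auto intro: Fint)
    also have "\<dots> = (\<Sum>x\<in>{1..K n}. c - D)"
      by (rule sum.cong) (auto simp: Bochner_Integration.integral_diff Fint ED P.prob_space)
    also have "\<dots> = real_of_int (K n) * (c - D)" using K0[of n] by simp
    finally show ?thesis .
  qed
  have gbd: "AE \<omega> in M. g n \<omega> \<le> real_of_int (K n) * c" for n
    using good
  proof eventually_elim
    case (elim \<omega>)
    have "g n \<omega> \<le> (\<Sum>x\<in>{1..K n}. c)" unfolding g_def
      by (rule sum_mono) auto
    then show ?case using K0[of n] by simp
  qed
  define a where "a = \<bar>\<alpha>\<bar> * (c - D)"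
  assume "\<not> \<Lambda> \<alpha> \<le> c - \<bar>\<alpha>\<bar> * (c - P.expectation (\<lambda>\<omega>. \<bar>F 0 \<omega>\<bar>))"
  then have lt: "c - \<Lambda> \<alpha> < a" unfolding a_def D_def by simp
  define t' where "t' = (c - \<Lambda> \<alpha> + a) / 2"
  have t'a: "t' < a" "c - \<Lambda> \<alpha> < t'" using lt unfolding t'_def by auto
  have ev: "AE \<omega> in M. eventually (\<lambda>n. g n \<omega> / real n \<le> t') sequentially"
    using good shape[OF \<open>\<alpha> \<in> {-1..1}\<close>]
  proof eventually_elim
    case (elim \<omega>)
    note om = elim
    have "eventually (\<lambda>n. min_action (\<lambda>i. B i \<omega>) (\<lambda>x. F x \<omega>) n (round0 (\<alpha> * real n)) / real n < - c + t') sequentially"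
      using order_tendstoD(2)[OF om(2), of "- c + t'"] t'a by simp
    then show ?case using eventually_ge_at_top[of "1::nat"]
    proof eventually_elim
      case (elim n)
      have "min_action (\<lambda>i. B i \<omega>) (\<lambda>x. F x \<omega>) n (round0 (\<alpha> * real n)) \<ge>
          - c * real n + g n \<omega>"
        unfolding g_def K_def sg_def
        by (rule min_action_bound) (use om Kn[of n] in \<open>auto simp: K_def\<close>)
      then have "(- c * real n + g n \<omega>) / real n < - c + t'"
        using elim by (smt (verit) divide_right_mono of_nat_0_le_iff)
      moreover have "(- c * real n + g n \<omega>) / real n = - c + g n \<omega> / real n"
        using elim by (simp add: field_simps)
      ultimately show ?case by simp
    qed
  qed
  define u where "u = (\<lambda>n \<omega>. ennreal (c - g n \<omega> / real n))"
  have um: "u n \<in> borel_measurable M" for n unfolding u_def by measurable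
  have "ennreal (c - t') = (\<integral>\<^sup>+ \<omega>. ennreal (c - t') \<partial>M)"
    by (simp add: P.emeasure_space_1)
  also have "\<dots> \<le> (\<integral>\<^sup>+ \<omega>. liminf (\<lambda>n. u n \<omega>) \<partial>M)"
  proof (rule nn_integral_mono_AE)
    show "AE \<omega> in M. ennreal (c - t') \<le> liminf (\<lambda>n. u n \<omega>)"
      using ev
    proof eventually_elim
      case (elim \<omega>)
      show ?case unfolding u_def
        by (rule Liminf_bounded) (use elim in \<open>auto elim!: eventually_mono intro!: ennreal_leI\<close>)
    qed
  qed
  also have "\<dots> \<le> liminf (\<lambda>n. integral\<^sup>N M (u n))"
    by (rule nn_integral_liminf[OF um])
  also have "(\<lambda>n. integral\<^sup>N M (u n)) = (\<lambda>n. ennreal (c - real_of_int (K n) / real n * (c - D)))"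
  proof
    fix n
    have ig: "integrable M (g n)" unfolding g_def
      by (intro Bochner_Integration.integrable_sum Bochner_Integration.integrable_diff
          P.integrable_const Fint)
    have int: "integrable M (\<lambda>\<omega>. c - g n \<omega> / real n)"
    proof -
      show ?thesis
        by (intro Bochner_Integration.integrable_diff P.integrable_const
            Bochner_Integration.integrable_divide ig)
    qed
    have nn: "AE \<omega> in M. 0 \<le> c - g n \<omega> / real n"
      using gbd[of n]
    proof eventually_elim
      case (elim \<omega>)
      show ?case
      proof (cases "n = 0")
        case False
        then have "g n \<omega> / real n \<le> real_of_int (K n) * c / real n"
          using elim by (simp add: divide_right_mono)
        also have "\<dots> \<le> real n * c / real n"
          using Kn[of n] \<open>c > 0\<close> by (intro divide_right_mono mult_right_mono) auto
        also have "\<dots> = c" using False by simp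
        finally show ?thesis by simp
      qed (use \<open>c > 0\<close> in simp)
    qed
    have "integral\<^sup>N M (u n) = ennreal (P.expectation (\<lambda>\<omega>. c - g n \<omega> / real n))"
      unfolding u_def by (rule nn_integral_eq_integral[OF int nn])
    also have "P.expectation (\<lambda>\<omega>. c - g n \<omega> / real n) = c - P.expectation (g n) / real n"
      by (simp add: Bochner_Integration.integral_diff[OF P.integrable_const
            Bochner_Integration.integrable_divide[OF ig]] P.prob_space)
    also have "\<dots> = c - real_of_int (K n) / real n * (c - D)" using Eg[of n] by simp
    finally show "integral\<^sup>N M (u n) = ennreal (c - real_of_int (K n) / real n * (c - D))" .
  qed
  also have "liminf (\<lambda>n. ennreal (c - real_of_int (K n) / real n * (c - D))) = ennreal (c - a)"
  proof (rule lim_imp_Liminf)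
    show "(\<lambda>n. ennreal (c - real_of_int (K n) / real n * (c - D))) \<longlonglongrightarrow> ennreal (c - a)"
      unfolding a_def Kfl
      by (intro tendsto_ennrealI tendsto_intros floor_lim) simp
  qed simp
  finally have "ennreal (c - t') \<le> ennreal (c - a)" .
  moreover have "c - a \<ge> 0"
  proof (cases "c \<ge> D")
    case True
    have "\<bar>\<alpha>\<bar> * (c - D) \<le> 1 * (c - D)"
      using True \<open>\<alpha> \<in> {-1..1}\<close> by (intro mult_right_mono) auto
    then show ?thesis unfolding a_def using D0 by simp
  next
    case False
    then have "\<bar>\<alpha>\<bar> * (c - D) \<le> 0" by (simp add: mult_nonneg_nonpos)
    then show ?thesis unfolding a_def using \<open>c > 0\<close> by simp
  qed
  ultimately have "c - t' \<le> c - a" by simp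
  then show False using t'a by simp
qed

end
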